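(* For two coprime natural numbers $a$ and $b$, \[ \alpha(\{a, b\}) = \frac{\lfloor \frac{a+b}{2} \rfloor}{a+b}. \]
   Context: For a finite $D \subset \mathbb{N} = \{1,2,\ldots\}$ and $n \geq 1$, the circulant graph $G_n$ with set of distances $D$ has vertex set $\{0, \ldots, n-1\}$, vertices $u, v$ (possibly equal) being adjacent iff $u - v \equiv d$ or $v - u \equiv d \pmod n$ for some $d \in D$. $\alpha(G)$ is the maximum size of an independent set (no two adjacent vertices, no looped vertex), and $\alpha(D) := \lim_{n\to\infty} \alpha(G_n)/n$ (which exists). *)

theory Defs
  imports Complex_Main
begin

definition circ_adj :: "nat set \<Rightarrow> nat \<Rightarrow> nat \<Rightarrow> nat \<Rightarrow> bool" where
  "circ_adj D n u v \<longleftrightarrow>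
     (\<exists>d\<in>D. (int u - int v) mod int n = int d mod int n
           \<or> (int v - int u) mod int n = int d mod int n)"

text \<open>Independent set: no two (not necessarily distinct) vertices adjacent;
  in particular no looped vertex.\<close>
definition circ_indep :: "nat set \<Rightarrow> nat \<Rightarrow> nat set \<Rightarrow> bool" where
  "circ_indep D n S \<longleftrightarrow> S \<subseteq> {0..<n} \<and> (\<forall>u\<in>S. \<forall>v\<in>S. \<not> circ_adj D n u v)"

definition circ_alpha :: "nat set \<Rightarrow> nat \<Rightarrow> nat" where
  "circ_alpha D n = Max (card ` {S. circ_indep D n S})"

end

theory Submission
  imports Defs
begin

lemma block_bound:
  assumes ind: "\<forall>u\<in>S. \<forall>v\<in>S. \<not> circ_adj {a,b} n u v"
  shows "2 * card (S \<inter> {x..<x+(a+b)}) \<le> a+b"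
proof -
  define A where "A = S \<inter> {x..<x+(a+b)}"
  define f where "f v = (if v < x + a then v + b else v - a)" for v
  have inj: "inj_on f {x..<x+(a+b)}"
    unfolding inj_on_def f_def by auto
  have sub: "f ` A \<subseteq> {x..<x+(a+b)} - A"
  proof
    fix w assume "w \<in> f ` A"
    then obtain v where v: "v \<in> A" "w = f v" by auto
    show "w \<in> {x..<x+(a+b)} - A"
    proof (cases "v < x + a")
      case True
      then have w: "w = v + b" using v by (simp add: f_def)
      have "circ_adj {a,b} n v w" unfolding circ_adj_def w by auto
      then show ?thesis using ind v True w unfolding A_def by auto
    next
      case False
      then have w: "w = v - a" using v by (simp add: f_def)
      have "circ_adj {a,b} n v w" unfolding circ_adj_def w using False by auto
      then show ?thesis using ind v False w unfolding A_def by auto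
    qed
  qed
  have "card A = card (f ` A)"
    by (rule card_image[symmetric], rule inj_on_subset[OF inj], auto simp: A_def)
  also have "\<dots> \<le> card ({x..<x+(a+b)} - A)" by (rule card_mono[OF _ sub]) auto
  also have "\<dots> = (a+b) - card A"
    by (subst card_Diff_subset) (auto simp: A_def)
  finally show ?thesis unfolding A_def by linarith
qed

lemma prefix_bound:
  assumes ind: "\<forall>u\<in>S. \<forall>v\<in>S. \<not> circ_adj {a,b} n u v"
  shows "card (S \<inter> {..<j*(a+b)}) \<le> j * ((a+b) div 2)"
proof (induction j)
  case 0 then show ?case by simp
next
  case (Suc j)
  have "S \<inter> {..<Suc j*(a+b)} = (S \<inter> {..<j*(a+b)}) \<union> (S \<inter> {j*(a+b)..<j*(a+b)+(a+b)})"
    by auto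
  then have "card (S \<inter> {..<Suc j*(a+b)}) \<le> card (S \<inter> {..<j*(a+b)}) + card (S \<inter> {j*(a+b)..<j*(a+b)+(a+b)})"
    by (metis card_Un_le)
  moreover have "card (S \<inter> {j*(a+b)..<j*(a+b)+(a+b)}) \<le> (a+b) div 2"
    using block_bound[OF ind, of "j*(a+b)"] by linarith
  ultimately show ?case using Suc by simp
qed

lemma upper_bound:
  assumes ind: "circ_indep {a,b} n S" and s: "a + b \<ge> 1"
  shows "card S \<le> (n div (a+b)) * ((a+b) div 2) + (a+b)"
proof -
  let ?s = "a+b" let ?q = "n div ?s"
  have Ssub: "S \<subseteq> {..<n}" using ind unfolding circ_indep_def by auto
  have "S \<subseteq> (S \<inter> {..<?q*?s}) \<union> {?q*?s..<n}" using Ssub by auto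
  then have "card S \<le> card ((S \<inter> {..<?q*?s}) \<union> {?q*?s..<n})"
    by (intro card_mono) auto
  also have "\<dots> \<le> card (S \<inter> {..<?q*?s}) + card {?q*?s..<n}" by (rule card_Un_le)
  finally have "card S \<le> card (S \<inter> {..<?q*?s}) + card {?q*?s..<n}" .
  moreover have "card {?q*?s..<n} < ?s"
  proof -
    have "n - ?q*?s = n mod ?s" by (simp add: minus_div_mult_eq_mod)
    moreover have "?s > 0" using s by arith
    ultimately show ?thesis using mod_less_divisor[of ?s n] by simp
  qed
  moreover have "card (S \<inter> {..<?q*?s}) \<le> ?q * (?s div 2)"
    using prefix_bound ind unfolding circ_indep_def by blast
  ultimately show ?thesis by linarith
qed


lemma key_dvd:
  fixes s b z :: int
  assumes "coprime b s" "s dvd z * b" "\<bar>z\<bar> < s"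
  shows "z = 0"
proof (rule ccontr)
  assume "z \<noteq> 0"
  have "s dvd z" using assms(1,2) by (metis coprime_commute coprime_dvd_mult_left_iff)
  then have "\<bar>s\<bar> \<le> \<bar>z\<bar>" using \<open>z \<noteq> 0\<close> by (simp add: dvd_imp_le_int)
  then show False using assms(3) by linarith
qed

lemma count_mod:
  fixes s :: nat
  assumes "F \<subseteq> {..<s}"
  shows "card {x. x < r*s \<and> x mod s \<in> F} = r * card F"
proof (induction r)
  case 0 then show ?case by simp
next
  case (Suc r)
  have eq: "{x. x < Suc r*s \<and> x mod s \<in> F} = {x. x < r*s \<and> x mod s \<in> F} \<union> (\<lambda>t. r*s + t) ` F"
  proof (intro set_eqI iffI)
    fix x assume x: "x \<in> {x. x < Suc r*s \<and> x mod s \<in> F}"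
    show "x \<in> {x. x < r*s \<and> x mod s \<in> F} \<union> (\<lambda>t. r*s + t) ` F"
    proof (cases "x < r*s")
      case True then show ?thesis using x by auto
    next
      case False
      define t where "t = x - r*s"
      have xt: "x = r*s + t" using False t_def by simp
      have "t < s" using x xt by simp
      then have "x mod s = t" using xt by simp
      then have "t \<in> F" using x by simp
      then show ?thesis using xt by blast
    qed
  next
    fix x assume "x \<in> {x. x < r*s \<and> x mod s \<in> F} \<union> (\<lambda>t. r*s + t) ` F"
    then show "x \<in> {x. x < Suc r*s \<and> x mod s \<in> F}" using assms by auto
  qed
  have disj: "{x. x < r*s \<and> x mod s \<in> F} \<inter> (\<lambda>t. r*s + t) ` F = {}" by auto
  have fin: "finite F" using assms finite_subset by blast
  have "card {x. x < Suc r*s \<and> x mod s \<in> F} = card {x. x < r*s \<and> x mod s \<in> F} + card ((\<lambda>t. r*s + t) ` F)"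
    unfolding eq by (rule card_Un_disjoint) (use fin disj in auto)
  also have "card ((\<lambda>t. r*s + t) ` F) = card F" by (simp add: card_image)
  finally show ?case using Suc by simp
qed


lemma cop: fixes a b :: nat assumes "coprime a b" shows "coprime (int b) (int a + int b)"
proof -
  have "coprime (int b) (int a)" using assms by (simp add: coprime_commute)
  then have "gcd (int b) (int a) = 1" by simp
  then have "gcd (int b) (int b + int a) = 1" by simp
  then show ?thesis by (simp add: add.commute coprime_iff_gcd_eq_1)
qed

lemma card_F:
  fixes a b :: nat
  assumes "coprime a b" "a \<ge> 1" "b \<ge> 1"
  shows "card ((\<lambda>i. (2*i*b) mod (a+b)) ` {..<(a+b) div 2}) = (a+b) div 2"
proof -
  have "inj_on (\<lambda>i. (2*i*b) mod (a+b)) {..<(a+b) div 2}"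
  proof (rule inj_onI)
    fix i j assume i: "i \<in> {..<(a+b) div 2}" and j: "j \<in> {..<(a+b) div 2}"
      and e: "(2*i*b) mod (a+b) = (2*j*b) mod (a+b)"
    have "int (2*i*b) mod int (a+b) = int (2*j*b) mod int (a+b)"
      using e by (metis of_nat_mod)
    then have "int (a+b) dvd int (2*i*b) - int (2*j*b)"
      by (simp add: mod_eq_dvd_iff)
    then have d: "int a + int b dvd (2*int i - 2*int j) * int b"
      by (simp add: algebra_simps)
    have "\<bar>2*int i - 2*int j\<bar> < int a + int b" using i j by auto
    then have "2*int i - 2*int j = 0" using key_dvd[OF cop[OF assms(1)] d] by simp
    then show "i = j" by simp
  qed
  then show ?thesis by (simp add: card_image)
qed

lemma diff_eq:
  fixes x y n d s :: nat
  assumes "x < n - s" "y < n - s" "d < s" "s \<le> n"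
    and "(int x - int y) mod int n = int d mod int n"
  shows "x = y + d"
proof -
  have "int n dvd (int x - int y) - int d" using assms(5) by (simp add: mod_eq_dvd_iff)
  then obtain c where c: "int x - int y - int d = int n * c" by (auto elim: dvdE)
  have "c = 0"
  proof (rule ccontr)
    assume "c \<noteq> 0"
    then have "\<bar>int n * c\<bar> \<ge> int n" proof -
      have "\<bar>c\<bar> \<ge> 1" using \<open>c \<noteq> 0\<close> by linarith
      then have "int n * 1 \<le> int n * \<bar>c\<bar>" by (intro mult_left_mono) auto
      then show ?thesis by (simp add: abs_mult)
    qed
    moreover have "\<bar>int x - int y - int d\<bar> < int n" using assms(1-4) by auto
    ultimately show False using c by linarith
  qed
  then show ?thesis using c by simp
qed

lemma S_indep:
  fixes a b n :: nat
  assumes "coprime a b" "a \<ge> 1" "b \<ge> 1"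
  defines "F \<equiv> (\<lambda>i. (2*i*b) mod (a+b)) ` {..<(a+b) div 2}"
  shows "circ_indep {a,b} n {x. x < (n div (a+b) - 1)*(a+b) \<and> x mod (a+b) \<in> F}"
proof -
  let ?s = "a+b" let ?q = "n div ?s"
  define S where "S = {x. x < (?q - 1)*?s \<and> x mod ?s \<in> F}"
  have qs: "?q * ?s \<le> n" by (simp add: div_times_less_eq_dividend)
  have one_dir: False if x: "x \<in> S" and y: "y \<in> S" and d: "d \<in> {a,b}"
      and m: "(int x - int y) mod int n = int d mod int n" for x y d
  proof -
    have "?q \<ge> 2" using x unfolding S_def
      by (cases "?q"; cases "?q - 1") auto
    have "1 * ?s \<le> ?q * ?s" using \<open>?q \<ge> 2\<close> by (intro mult_le_mono1) simp
    then have "?s \<le> ?q * ?s" by (simp only: mult_1)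
    then have sn: "?s \<le> n" using qs by (rule le_trans)
    have bq: "(?q - 1) * ?s = ?q * ?s - ?s" by (simp add: diff_mult_distrib)
    have bnd: "(?q - 1) * ?s \<le> n - ?s" unfolding bq using qs by (rule diff_le_mono)
    have xy: "x = y + d"
      apply (rule diff_eq[OF _ _ _ sn m])
      using x y d bnd assms(2,3) unfolding S_def by auto
    obtain i where i: "i < ?s div 2" "x mod ?s = (2*i*b) mod ?s" using x unfolding S_def F_def by auto
    obtain j where j: "j < ?s div 2" "y mod ?s = (2*j*b) mod ?s" using y unfolding S_def F_def by auto
    have "int ?s dvd int x - int (2*i*b)" using i(2) by (metis mod_eq_dvd_iff of_nat_mod)
    moreover have "int ?s dvd int y - int (2*j*b)" using j(2) by (metis mod_eq_dvd_iff of_nat_mod)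
    ultimately have D: "int ?s dvd (int x - int (2*i*b)) - (int y - int (2*j*b))" by (rule dvd_diff)
    have ij: "\<bar>2*int i - 2*int j\<bar> \<le> int ?s - 2" using i(1) j(1) by auto
    show False
    proof (cases "d = b")
      case True
      have "(int x - int (2*i*b)) - (int y - int (2*j*b)) = - ((2*int i - 2*int j - 1) * int b)"
        using xy True by (simp add: algebra_simps)
      then have "int a + int b dvd (2*int i - 2*int j - 1) * int b" using D by simp
      from key_dvd[OF cop[OF assms(1)] this] ij have "2*int i - 2*int j - 1 = 0" by auto
      then show False by presburger
    next
      case False
      then have da: "d = a" using d by auto
      have "(int x - int (2*i*b)) - (int y - int (2*j*b)) = (int a + int b) - ((2*int i - 2*int j + 1) * int b)"
        using xy da by (simp add: algebra_simps)
      then have "int a + int b dvd (2*int i - 2*int j + 1) * int b" using D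
        by (metis dvd_add_right_iff dvd_refl dvd_minus_iff diff_conv_add_uminus of_nat_add)
      from key_dvd[OF cop[OF assms(1)] this] ij have "2*int i - 2*int j + 1 = 0" by auto
      then show False by presburger
    qed
  qed
  have "\<not> circ_adj {a,b} n u v" if "u \<in> S" "v \<in> S" for u v
    unfolding circ_adj_def using one_dir[OF that(1,2)] one_dir[OF that(2,1)] by blast
  moreover have "S \<subseteq> {0..<n}"
  proof
    fix x assume "x \<in> S"
    then have "x < (?q - 1) * ?s" unfolding S_def by auto
    also have "\<dots> \<le> n" using qs by (meson diff_le_self le_trans mult_le_mono1)
    finally show "x \<in> {0..<n}" by simp
  qed
  ultimately show ?thesis unfolding circ_indep_def S_def by blast
qed


lemma alpha_ge: "circ_indep D n S \<Longrightarrow> card S \<le> circ_alpha D n"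
proof -
  assume "circ_indep D n S"
  have fin: "finite {S. circ_indep D n S}"
    by (rule finite_subset[of _ "Pow {0..<n}"]) (auto simp: circ_indep_def)
  show ?thesis unfolding circ_alpha_def
    by (rule Max_ge) (use fin \<open>circ_indep D n S\<close> in auto)
qed

lemma alpha_wit: "\<exists>S. circ_indep D n S \<and> card S = circ_alpha D n"
proof -
  have fin: "finite {S. circ_indep D n S}"
    by (rule finite_subset[of _ "Pow {0..<n}"]) (auto simp: circ_indep_def)
  have ne: "{S. circ_indep D n S} \<noteq> {}" by (auto simp: circ_indep_def circ_adj_def intro!: exI[of _ "{}"])
  have "circ_alpha D n \<in> card ` {S. circ_indep D n S}" unfolding circ_alpha_def
    by (rule Max_in) (use fin ne in auto)
  then show ?thesis by auto
qed

theorem proposition4: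
  fixes a b :: nat
  assumes "a \<ge> 1" and "b \<ge> 1" and "coprime a b"
  shows "(\<lambda>n. real (circ_alpha {a, b} n) / real n)
           \<longlonglongrightarrow> real ((a + b) div 2) / real (a + b)"
proof -
  define s where "s = a + b"
  define k where "k = s div 2"
  define F where "F = (\<lambda>i. (2*i*b) mod (a+b)) ` {..<(a+b) div 2}"
  have s1: "s \<ge> 1" using assms s_def by simp
  have cF: "card F = k" unfolding F_def k_def s_def by (rule card_F[OF assms(3,1,2)])
  have Fs: "F \<subseteq> {..<s}" unfolding F_def s_def using assms by auto
  have low: "(n div s - 1) * k \<le> circ_alpha {a,b} n" for n
  proof -
    have "card {x. x < (n div s - 1)*s \<and> x mod s \<in> F} = (n div s - 1) * k"
      using count_mod[OF Fs] cF by simp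
    moreover have "circ_indep {a,b} n {x. x < (n div s - 1)*s \<and> x mod s \<in> F}"
      using S_indep[OF assms(3,1,2), of n] unfolding F_def s_def by simp
    ultimately show ?thesis using alpha_ge by metis
  qed
  have up: "circ_alpha {a,b} n \<le> (n div s) * k + s" for n
  proof -
    obtain S where "circ_indep {a,b} n S" "card S = circ_alpha {a,b} n" using alpha_wit by blast
    then show ?thesis using upper_bound[of a b n S] s1 unfolding s_def k_def by simp
  qed
  have sr: "real s > 0" using s1 by simp
  have qlo: "real (n div s) \<ge> real n / real s - 1" for n
  proof -
    have m: "n mod s < s" using s1 by (intro mod_less_divisor) arith
    have e: "n div s * s + n mod s = n" by (rule div_mult_mod_eq)
    have "(n div s + 1) * s = n div s * s + s" by (simp add: algebra_simps)
    then have "n < (n div s + 1) * s" using m e by linarith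
    then have "real n < (real (n div s) + 1) * real s" by (metis of_nat_1 of_nat_add of_nat_less_iff of_nat_mult)
    then show ?thesis using sr by (simp add: field_simps)
  qed
  have qhi: "real (n div s) \<le> real n / real s" for n
  proof -
    have "(n div s) * s \<le> n" by simp
    then have "real (n div s) * real s \<le> real n" by (metis of_nat_le_iff of_nat_mult)
    then show ?thesis using sr by (simp add: field_simps)
  qed
  have lowr: "real k / real s - 2 * real k / real n \<le> real (circ_alpha {a, b} n) / real n" if n: "n \<ge> 1" for n
  proof -
    have "real (n div s - 1) \<ge> real (n div s) - 1" by simp
    then have "real (n div s - 1) \<ge> real n / real s - 2" using qlo[of n] by linarith
    then have "real (n div s - 1) * real k \<ge> (real n / real s - 2) * real k" by (intro mult_right_mono) auto
    moreover have "real ((n div s - 1) * k) \<le> real (circ_alpha {a,b} n)" using low[of n] by linarith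
    ultimately have "(real n / real s - 2) * real k \<le> real (circ_alpha {a,b} n)" by simp
    then have "(real n / real s - 2) * real k / real n \<le> real (circ_alpha {a,b} n) / real n"
      by (intro divide_right_mono) auto
    moreover have "(real n / real s - 2) * real k / real n = real k / real s - 2 * real k / real n"
      using n sr by (simp add: field_simps)
    ultimately show ?thesis by simp
  qed
  have upr: "real (circ_alpha {a, b} n) / real n \<le> real k / real s + real s / real n" if n: "n \<ge> 1" for n
  proof -
    have "real (circ_alpha {a,b} n) \<le> real (n div s) * real k + real s" using up[of n]
      by (metis of_nat_add of_nat_le_iff of_nat_mult)
    also have "\<dots> \<le> real n / real s * real k + real s" using qhi[of n] by (intro add_right_mono mult_right_mono) auto
    finally have "real (circ_alpha {a,b} n) / real n \<le> (real n / real s * real k + real s) / real n"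
      by (intro divide_right_mono) auto
    also have "\<dots> = real k / real s + real s / real n" using n sr by (simp add: field_simps)
    finally show ?thesis .
  qed
  have L1: "(\<lambda>n. real k / real s - 2 * real k / real n) \<longlonglongrightarrow> real k / real s"
    using tendsto_diff[OF tendsto_const lim_const_over_n[of "2 * real k"], of "real k / real s"] by simp
  have L2: "(\<lambda>n. real k / real s + real s / real n) \<longlonglongrightarrow> real k / real s"
    using tendsto_add[OF tendsto_const lim_const_over_n[of "real s"], of "real k / real s"] by simp
  have "(\<lambda>n. real (circ_alpha {a, b} n) / real n) \<longlonglongrightarrow> real k / real s"
    by (rule real_tendsto_sandwich[OF _ _ L1 L2])
       (auto intro!: eventually_sequentiallyI[of 1] lowr upr)
  then show ?thesis unfolding k_def s_def .
qed

end
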